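(* Let $(\theta_n)_{n\ge1}$ be a periodic sequence of complex numbers, and let $q$ be a positive multiple of its period. If $\sum_{j=1}^q\theta_j=0$, then $$\sum_{n=1}^{\infty}\theta_n\left(1-n\log\frac{n+1}{n}\right)=\sum_{j=1}^{q}\theta_j\log\frac{K\left(\frac{j+1}{q}\right)^q e^{-j/q}}{K\left(\frac jq\right)^q\,\Gamma\left(\frac{j+1}{q}\right)}.$$
   Context: $\Gamma$ is Euler's gamma function. The Kinkelin–Bendersky hyperfactorial $K$ function is the real-valued function on $[0,\infty)$ defined by $\log K(x)=\frac{x^2-x}{2}-\frac x2\log 2\pi+\int_0^x\log\Gamma(y)\,dy$. *)

theory Defs
  imports "HOL-Analysis.Analysis"
begin

text \<open>Kinkelin--Bendersky hyperfactorial K on [0,\<infinity>):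
  log K(x) = (x^2 - x)/2 - (x/2) log(2 pi) + integral from 0 to x of log Gamma(y) dy.
  (The integrand is improper but absolutely integrable at 0; the value at the single
  point y = 0 is irrelevant.)\<close>
definition K_hyp :: "real \<Rightarrow> real" where
  "K_hyp x = exp ((x^2 - x) / 2 - x / 2 * ln (2 * pi) + integral {0..x} (\<lambda>y. ln (Gamma y)))"

end

theory Submission imports Defs "HOL-Real_Asymp.Real_Asymp" begin

lemma L_isCont: assumes "x > 0" shows "isCont (\<lambda>x::real. ln (Gamma x)) x"
proof -
  have "Gamma x > 0" using Gamma_real_pos[OF assms] .
  then have "Gamma x \<noteq> 0" by linarith
  then show ?thesis by (intro continuous_intros) (use assms in \<open>auto simp: nonpos_Ints_def\<close>)
qed

lemma L_cont: "a > 0 \<Longrightarrow> continuous_on {a..b} (\<lambda>x::real. ln (Gamma x))"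
  by (intro continuous_at_imp_continuous_on ballI L_isCont) auto

lemma ln_has_integral: assumes "b \<ge> 0"
  shows "((\<lambda>y::real. ln y) has_integral (b * ln b - b)) {0..b}"
proof (cases "b = 0")
  case True then show ?thesis using has_integral_refl(2)[of ln "0::real"] by simp
next
  case False
  with assms have b: "b > 0" by simp
  have c: "continuous_on {0..b} (\<lambda>y::real. y * ln y - y)"
  proof (rule continuous_on_IccI)
    show "((\<lambda>y::real. y * ln y - y) \<longlongrightarrow> 0 * ln 0 - 0) (at_right 0)" by simp real_asymp
    show "((\<lambda>y::real. y * ln y - y) \<longlongrightarrow> b * ln b - b) (at_left b)"
      using b by (intro tendsto_intros) auto
    fix x :: real assume "0 < x" "x < b"
    then show "(\<lambda>y::real. y * ln y - y) \<midarrow>x\<rightarrow> x * ln x - x"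
      by (intro tendsto_intros) auto
  qed (use b in auto)
  have "((\<lambda>y::real. ln y) has_integral ((b * ln b - b) - (0 * ln 0 - 0))) {0..b}"
    apply (rule fundamental_theorem_of_calculus_interior[OF assms c])
    apply (subst has_real_derivative_iff_has_vector_derivative[symmetric])
    by (auto intro!: derivative_eq_intros)
  then show ?thesis by simp
qed

lemma L_integrable: assumes "b \<ge> 0"
  shows "(\<lambda>x::real. ln (Gamma x)) integrable_on {0..b}"
proof -
  have c1: "continuous_on {0..b} (\<lambda>x::real. ln (Gamma (x+1)))"
    apply (intro continuous_at_imp_continuous_on ballI)
    apply (rule continuous_at_compose[unfolded o_def, of _ "\<lambda>x. x+1" "\<lambda>x. ln (Gamma x)"])
    by (auto intro!: continuous_intros L_isCont)
  have "(\<lambda>x::real. ln (Gamma (x+1)) - ln x) integrable_on {0..b}"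
    apply (rule integrable_diff)
     apply (rule integrable_continuous_interval[OF c1])
    using ln_has_integral[OF assms] by blast
  then show ?thesis
  proof (rule integrable_spike_finite[where S="{0}", rotated 2])
    fix x assume "x \<in> {0..b} - {0}"
    then have "x > 0" by auto
    then have "Gamma x > 0" by simp
    then show "ln (Gamma x) = ln (Gamma (x+1)) - ln x"
      using \<open>x > 0\<close> ln_mult_pos[OF \<open>x>0\<close> \<open>Gamma x > 0\<close>] by (simp add: Gamma_plus1 nonpos_Ints_def)
  qed auto
qed

definition lK :: "real \<Rightarrow> real" where
  "lK x = (x^2 - x) / 2 - x / 2 * ln (2 * pi) + integral {0..x} (\<lambda>y. ln (Gamma y))"

definition FF :: "nat \<Rightarrow> real \<Rightarrow> real" where
  "FF q x = real q * (lK (x + 1 / real q) - lK x) - x - ln (Gamma (x + 1 / real q))"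

lemma K_hyp_eq: "K_hyp x = exp (lK x)"
  by (simp add: K_hyp_def lK_def)

lemma I_diff: assumes "0 \<le> a" "a \<le> b"
  shows "integral {0..b} (\<lambda>y. ln (Gamma y)) - integral {0..a} (\<lambda>y. ln (Gamma y))
         = integral {a..b} (\<lambda>y::real. ln (Gamma y))"
  using Henstock_Kurzweil_Integration.integral_combine[where f="\<lambda>y. ln (Gamma y)" and a=0 and c=a and b=b, OF assms L_integrable] assms by simp

lemma Lshift_cont: assumes "x > 0" "y \<ge> 0"
  shows "continuous_on {x..b} (\<lambda>t::real. ln (Gamma (t + y)))"
  apply (intro continuous_at_imp_continuous_on ballI)
  apply (rule continuous_at_compose[unfolded o_def, of _ "\<lambda>t. t+y" "\<lambda>x. ln (Gamma x)"])
  using assms by (auto intro!: continuous_intros L_isCont)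

lemma lK_2diff: assumes x: "x > 0" and y: "y \<ge> 0" and h: "h > 0"
  shows "lK (x+y+h) - lK (x+y) - lK (x+h) + lK x
         = y * h + integral {x..x+h} (\<lambda>t. ln (Gamma (t+y)) - ln (Gamma t))"
proof -
  let ?L = "\<lambda>t::real. ln (Gamma t)"
  have i1: "integral {0..x+y+h} ?L - integral {0..x+y} ?L = integral {x+y..x+y+h} ?L"
    using I_diff[of "x+y" "x+y+h"] x y h by simp
  have i2: "integral {0..x+h} ?L - integral {0..x} ?L = integral {x..x+h} ?L"
    using I_diff[of "x" "x+h"] x y h by simp
  have i3: "integral {x+y..x+y+h} ?L = integral {x..x+h} (\<lambda>t. ?L (t+y))"
    using integral_shift_real_ivl[of "x+y" y "x+y+h" ?L] by simp
  have int1: "(\<lambda>t. ?L (t+y)) integrable_on {x..x+h}"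
    by (rule integrable_continuous_interval[OF Lshift_cont[OF x y]])
  have int2: "?L integrable_on {x..x+h}"
    by (rule integrable_continuous_interval[OF L_cont[OF x]])
  have i4: "integral {x..x+h} (\<lambda>t. ?L (t+y) - ?L t) = integral {x..x+h} (\<lambda>t. ?L (t+y)) - integral {x..x+h} ?L"
    by (rule Henstock_Kurzweil_Integration.integral_diff[OF int1 int2])
  have "lK (x+y+h) - lK (x+y) - lK (x+h) + lK x
        = y * h + (integral {0..x+y+h} ?L - integral {0..x+y} ?L) - (integral {0..x+h} ?L - integral {0..x} ?L)"
    unfolding lK_def by (simp add: power2_eq_square field_simps)
  then show ?thesis using i1 i2 i3 i4 by simp
qed

lemma FF_diff: assumes q: "q > 0" and x: "x > 0" and y: "y \<ge> 0"
  shows "FF q (x+y) - FF q x = real q * integral {x..x+1/real q} (\<lambda>t. ln (Gamma (t+y)) - ln (Gamma t))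
           - (ln (Gamma (x + 1/real q + y)) - ln (Gamma (x + 1/real q)))"
proof -
  have h: "1 / real q > 0" using q by simp
  have "FF q (x+y) - FF q x = real q * (lK (x+y+1/real q) - lK (x+y) - lK (x+1/real q) + lK x) - y
           - (ln (Gamma (x + 1/real q + y)) - ln (Gamma (x + 1/real q)))"
    by (simp add: FF_def algebra_simps)
  also have "\<dots> = real q * (y * (1/real q) + integral {x..x+1/real q} (\<lambda>t. ln (Gamma (t+y)) - ln (Gamma t))) - y
           - (ln (Gamma (x + 1/real q + y)) - ln (Gamma (x + 1/real q)))"
    by (subst lK_2diff[OF x y h]) simp
  also have "\<dots> = real q * integral {x..x+1/real q} (\<lambda>t. ln (Gamma (t+y)) - ln (Gamma t))
           - (ln (Gamma (x + 1/real q + y)) - ln (Gamma (x + 1/real q)))"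
    using q by (simp add: algebra_simps)
  finally show ?thesis .
qed

lemma L_step: "t > 0 \<Longrightarrow> ln (Gamma (t + 1)) - ln (Gamma t) = ln (t::real)"
proof -
  assume t: "t > 0"
  then have "Gamma t > 0" by simp
  then show ?thesis using t ln_mult_pos[OF t \<open>Gamma t > 0\<close>] by (simp add: Gamma_plus1 nonpos_Ints_def)
qed

lemma ln_integral: assumes "0 \<le> a" "a \<le> b"
  shows "integral {a..b} (\<lambda>t::real. ln t) = (b * ln b - b) - (a * ln a - a)"
proof -
  have "integral {0..a} ln + integral {a..b} ln = integral {0..b} (ln :: real \<Rightarrow> real)"
    using Henstock_Kurzweil_Integration.integral_combine[where f=ln and a=0 and c=a and b=b] assms ln_has_integral[of b] by auto
  moreover have "integral {0..a} ln = a * ln a - a" "integral {0..b} ln = b * ln b - (b::real)"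
    using ln_has_integral[of a] ln_has_integral[of b] assms by (auto intro: integral_unique)
  ultimately show ?thesis by simp
qed

lemma FF_step: assumes q: "q > 0" and n: "n \<ge> 1"
  shows "FF q (real n / real q + 1) - FF q (real n / real q) = real n * ln (real (n+1) / real n) - 1"
proof -
  define x where "x = real n / real q"
  define h where "h = 1 / real q"
  have x: "x > 0" using q n by (simp add: x_def)
  have h: "h > 0" using q by (simp add: h_def)
  have xh: "x + h = real (n+1) / real q" by (simp add: x_def h_def add_divide_distrib)
  have "integral {x..x+h} (\<lambda>t. ln (Gamma (t+1)) - ln (Gamma t)) = integral {x..x+h} (\<lambda>t. ln t)"
    by (rule integral_cong) (use x in \<open>auto simp: L_step\<close>)
  also have "\<dots> = ((x+h) * ln (x+h) - (x+h)) - (x * ln x - x)"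
    by (rule ln_integral) (use x h in auto)
  finally have I: "integral {x..x+h} (\<lambda>t. ln (Gamma (t+1)) - ln (Gamma t)) = ((x+h) * ln (x+h) - (x+h)) - (x * ln x - x)" .
  have L1: "ln (Gamma (x + h + 1)) - ln (Gamma (x + h)) = ln (x+h)"
    using L_step[of "x+h"] x h by simp
  have "FF q (x + 1) - FF q x = real q * (((x+h) * ln (x+h) - (x+h)) - (x * ln x - x)) - ln (x+h)"
    using FF_diff[OF q x, of 1] I L1 by (simp add: h_def)
  also have "\<dots> = real q * x * (ln (x+h) - ln x) - real q * h + (real q * h - 1) * ln (x+h)"
    by (simp add: algebra_simps)
  also have "real q * h = 1" using q by (simp add: h_def)
  also have "real q * x = real n" using q by (simp add: x_def)
  also have "ln (x+h) - ln x = ln (real (n+1) / real n)"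
  proof -
    have qp: "real q > 0" "real n > 0" "real (n+1) > 0" using q n by auto
    have "ln (x+h) = ln (real (n+1)) - ln (real q)" unfolding xh by (rule ln_divide_pos[OF qp(3,1)])
    moreover have "ln x = ln (real n) - ln (real q)" unfolding x_def by (rule ln_divide_pos[OF qp(2,1)])
    moreover have "ln (real (n+1) / real n) = ln (real (n+1)) - ln (real n)" by (rule ln_divide_pos[OF qp(3,2)])
    ultimately show ?thesis by simp
  qed
  finally show ?thesis by (simp add: x_def)
qed

lemma three_slope: fixes f :: "real \<Rightarrow> real"
  assumes cv: "convex_on I f" and I: "a \<in> I" "c \<in> I" and abc: "a < b" "b < c"
  shows "(f b - f a) / (b - a) \<le> (f c - f b) / (c - b)"
proof -
  have 1: "(f a - f b) / (a - b) \<le> (f a - f c) / (a - c)"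
    by (rule convex_on_slope_le(1)[OF cv I abc])
  have 2: "(f a - f c) / (a - c) \<le> (f b - f c) / (b - c)"
    by (rule convex_on_slope_le(2)[OF cv I abc])
  have e1: "(f a - f b) / (a - b) = (f b - f a) / (b - a)"
    by (metis minus_diff_eq minus_divide_divide)
  have e2: "(f b - f c) / (b - c) = (f c - f b) / (c - b)"
    by (metis minus_diff_eq minus_divide_divide)
  show ?thesis using 1 2 e1 e2 by linarith
qed

lemma L_slope_bounds: fixes x t y :: real
  assumes x: "x \<ge> 2" and t: "x \<le> t" "t \<le> x + 1" and y: "0 \<le> y" "y \<le> 1"
  shows "y * ln (x - 1) \<le> ln (Gamma (t+y)) - ln (Gamma t)"
    and "ln (Gamma (t+y)) - ln (Gamma t) \<le> y * ln (x + 2)"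
proof -
  let ?f = "\<lambda>x. ln (Gamma x) :: real"
  have cv: "convex_on {0<..} ?f" using log_convex_Gamma_real by (simp add: o_def)
  have s1: "ln (Gamma t) - ln (Gamma (t-1)) = ln (t - 1)"
    using L_step[of "t-1"] x t by simp
  have s2: "ln (Gamma (t+y+1)) - ln (Gamma (t+y)) = ln (t + y)"
    using L_step[of "t+y"] x t y by simp
  show "y * ln (x - 1) \<le> ln (Gamma (t+y)) - ln (Gamma t)"
  proof (cases "y = 0")
    case True then show ?thesis by simp
  next
    case False
    with y have yp: "y > 0" by simp
    have a: "(?f t - ?f (t-1)) / (t - (t-1)) \<le> (?f (t+y) - ?f t) / ((t+y) - t)"
      by (rule three_slope[OF cv]) (use x t yp in auto)
    then have "ln (t-1) \<le> (ln (Gamma (t+y)) - ln (Gamma t)) / y"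
      using s1 by simp
    then have "y * ln (t-1) \<le> ln (Gamma (t+y)) - ln (Gamma t)"
      using yp by (simp add: pos_le_divide_eq mult.commute)
    moreover have "ln (x-1) \<le> ln (t-1)" using x t by simp
    ultimately show ?thesis using yp by (smt (verit) mult_left_mono)
  qed
  show "ln (Gamma (t+y)) - ln (Gamma t) \<le> y * ln (x + 2)"
  proof (cases "y = 0")
    case True then show ?thesis by simp
  next
    case False
    with y have yp: "y > 0" by simp
    have a: "(?f (t+y) - ?f t) / ((t+y) - t) \<le> (?f (t+y+1) - ?f (t+y)) / ((t+y+1) - (t+y))"
      by (rule three_slope[OF cv]) (use x t yp in auto)
    then have "(ln (Gamma (t+y)) - ln (Gamma t)) / y \<le> ln (t+y)"
      using s2 by simp
    then have "ln (Gamma (t+y)) - ln (Gamma t) \<le> y * ln (t+y)"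
      using yp by (simp add: pos_divide_le_eq mult.commute)
    moreover have "ln (t+y) \<le> ln (x+2)" using x t y by simp
    ultimately show ?thesis using yp by (smt (verit) mult_left_mono)
  qed
qed

lemma FF_shift_bound: assumes q: "q > 0" and x: "x \<ge> 2" and y: "0 \<le> y" "y \<le> 1"
  shows "\<bar>FF q (x+y) - FF q x\<bar> \<le> ln (x + 2) - ln (x - 1)"
proof -
  define h where "h = 1 / real q"
  have h: "h > 0" "h \<le> 1" using q by (auto simp: h_def)
  have qh: "real q * h = 1" using q by (simp add: h_def)
  let ?g = "\<lambda>t. ln (Gamma (t+y)) - ln (Gamma t)"
  have x0: "x > 0" using x by simp
  have gi: "?g integrable_on {x..x+h}"
    by (intro integrable_diff integrable_continuous_interval Lshift_cont L_cont) (use x y in auto)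
  have lo: "integral {x..x+h} (\<lambda>t. y * ln (x - 1)) \<le> integral {x..x+h} ?g"
    by (rule integral_le[OF _ gi]) (use x y h L_slope_bounds(1)[of x _ y] in auto)
  have hi: "integral {x..x+h} ?g \<le> integral {x..x+h} (\<lambda>t. y * ln (x + 2))"
    by (rule integral_le[OF gi]) (use x y h L_slope_bounds(2)[of x _ y] in auto)
  have ic: "integral {x..x+h} (\<lambda>t. c) = h * c" for c using h by simp
  have qc: "real q * (h * c) = c" for c by (simp add: mult.assoc[symmetric] qh)
  have A1: "y * ln (x - 1) \<le> real q * integral {x..x+h} ?g"
    using mult_left_mono[OF lo, of "real q"] unfolding ic qc by simp
  have A2: "real q * integral {x..x+h} ?g \<le> y * ln (x + 2)"
    using mult_left_mono[OF hi, of "real q"] unfolding ic qc by simp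
  have B1: "y * ln (x - 1) \<le> ln (Gamma (x + h + y)) - ln (Gamma (x + h))"
    using L_slope_bounds(1)[of x "x+h" y] x y h by simp
  have B2: "ln (Gamma (x + h + y)) - ln (Gamma (x + h)) \<le> y * ln (x + 2)"
    using L_slope_bounds(2)[of x "x+h" y] x y h by simp
  have D: "FF q (x+y) - FF q x = real q * integral {x..x+h} ?g - (ln (Gamma (x + h + y)) - ln (Gamma (x + h)))"
    using FF_diff[OF q x0 y(1)] by (simp add: h_def)
  have "\<bar>FF q (x+y) - FF q x\<bar> \<le> y * (ln (x + 2) - ln (x - 1))"
    unfolding D using A1 A2 B1 B2 by (simp add: algebra_simps abs_le_iff)
  also have "\<dots> \<le> 1 * (ln (x + 2) - ln (x - 1))"
    by (rule mult_right_mono) (use x y in auto)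
  finally show ?thesis by simp
qed

lemma period_q:
  fixes \<theta> :: "nat \<Rightarrow> complex"
  assumes per: "\<forall>n\<ge>1. \<theta> (n + p) = \<theta> n" and "p dvd q" and that: "j \<ge> 1"
  shows "\<theta> (N * q + j) = \<theta> j"
proof -
  obtain k where k: "q = p * k" using assms(2) by blast
  have pk: "\<theta> (n + c * p) = \<theta> n" if "n \<ge> 1" for n c
  proof (induction c)
    case (Suc c)
    have "\<theta> (n + Suc c * p) = \<theta> ((n + c * p) + p)" by (simp add: algebra_simps)
    also have "\<dots> = \<theta> (n + c * p)" using per that by simp
    finally show ?case using Suc by simp
  qed simp
  have "N * q = (N * k) * p" using k by (simp add: algebra_simps)
  then have eq: "N * q + j = j + (N * k) * p" by simp
  show ?thesis unfolding eq by (rule pk[OF that])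
qed

lemma a_FF: assumes q: "q > 0" and j: "j \<ge> 1" and n: "n = N * q + j"
  shows "1 - real n * ln (real (n + 1) / real n)
         = FF q (real j / real q + real N) - FF q (real j / real q + real N + 1)"
proof -
  have "real n / real q = real j / real q + real N"
    using q n by (simp add: field_simps)
  then show ?thesis using FF_step[OF q, of n] n j by simp
qed

lemma RHS_term: assumes q: "q > 0"
  shows "ln ((K_hyp (real (j + 1) / real q) ^ q * exp (- real j / real q)) /
              (K_hyp (real j / real q) ^ q * Gamma (real (j + 1) / real q))) = FF q (real j / real q)"
proof -
  have e: "real (j + 1) / real q = real j / real q + 1 / real q" by (simp add: add_divide_distrib)
  define A where "A = lK (real j / real q + 1 / real q)"
  define B where "B = lK (real j / real q)"
  define G where "G = Gamma (real j / real q + 1 / real q)"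
  have G: "G > 0" unfolding G_def using q by (intro Gamma_real_pos) (simp add: add_nonneg_pos)
  have "ln ((exp A ^ q * exp (- real j / real q)) / (exp B ^ q * G))
        = ln (exp A ^ q * exp (- real j / real q)) - ln (exp B ^ q * G)"
    by (rule ln_divide_pos) (use G in auto)
  also have "\<dots> = real q * A - real j / real q - (real q * B + ln G)"
    using G by (simp add: ln_mult_pos ln_realpow)
  finally show ?thesis unfolding K_hyp_eq e FF_def A_def B_def G_def by (simp add: right_diff_distrib)
qed

lemma lnlim: "(\<lambda>N::nat. ln (real N + 2) - ln (real N - 1)) \<longlonglongrightarrow> 0"
  by real_asymp

lemma alim: "(\<lambda>m::nat. 1 - real (Suc m) * ln (real (Suc m + 1) / real (Suc m))) \<longlonglongrightarrow> 0"
  by real_asymp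

theorem theorem37:
  fixes \<theta> :: "nat \<Rightarrow> complex" and p q :: nat
  assumes "p > 0"
    and "\<forall>n\<ge>1. \<theta> (n + p) = \<theta> n"
    and "q > 0" and "p dvd q"
    and "(\<Sum>j=1..q. \<theta> j) = 0"
  shows "(\<lambda>m. \<theta> (Suc m) * complex_of_real (1 - real (Suc m) * ln (real (Suc m + 1) / real (Suc m))))
           sums (\<Sum>j=1..q. \<theta> j * complex_of_real (ln (
              (K_hyp (real (j + 1) / real q) ^ q * exp (- real j / real q)) /
              (K_hyp (real j / real q) ^ q * Gamma (real (j + 1) / real q)))))"
proof -
  note q = \<open>q > 0\<close>
  define tm where "tm m = \<theta> (Suc m) * complex_of_real (1 - real (Suc m) * ln (real (Suc m + 1) / real (Suc m)))" for m
  define R where "R = (\<Sum>j=1..q. \<theta> j * complex_of_real (FF q (real j / real q)))"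
  define T where "T M = (\<Sum>m<M. tm m)" for M
  have per: "\<theta> (N * q + j) = \<theta> j" if "j \<ge> 1" for N j
    by (rule period_q[OF assms(2) assms(4) that])
  have block: "(\<Sum>i\<in>{N*q..<N*q+q}. tm i) = (\<Sum>j=1..q. \<theta> j * complex_of_real
        (FF q (real j / real q + real N) - FF q (real j / real q + real N + 1)))" for N
  proof -
    have "(\<Sum>i\<in>{N*q..<N*q+q}. tm i) = (\<Sum>i\<in>{0..<q}. tm (i + N*q))"
      using sum.shift_bounds_nat_ivl[of tm 0 "N*q" q] by (simp add: add.commute)
    also have "\<dots> = (\<Sum>i<q. \<theta> (Suc i) * complex_of_real
        (FF q (real (Suc i) / real q + real N) - FF q (real (Suc i) / real q + real N + 1)))"
    proof (rule sum.cong)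
      fix i assume "i \<in> {..<q}"
      have e: "Suc (i + N * q) = N * q + Suc i" by simp
      show "tm (i + N*q) = \<theta> (Suc i) * complex_of_real
        (FF q (real (Suc i) / real q + real N) - FF q (real (Suc i) / real q + real N + 1))"
        unfolding tm_def e using per[of "Suc i" N] a_FF[OF q, of "Suc i" "N * q + Suc i" N]
        by simp
    qed auto
    also have "\<dots> = (\<Sum>j=1..q. \<theta> j * complex_of_real
        (FF q (real j / real q + real N) - FF q (real j / real q + real N + 1)))"
      using sum.atLeast1_atMost_eq[of "\<lambda>j. \<theta> j * complex_of_real
        (FF q (real j / real q + real N) - FF q (real j / real q + real N + 1))" q] by simp
    finally show ?thesis .
  qed
  have partial: "T (N*q) = (\<Sum>j=1..q. \<theta> j * complex_of_real (FF q (real j / real q) - FF q (real j / real q + real N)))" for N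
  proof (induction N)
    case 0 then show ?case by (simp add: T_def)
  next
    case (Suc N)
    have "T (Suc N * q) = T (N * q) + (\<Sum>i\<in>{N*q..<N*q+q}. tm i)"
      unfolding T_def lessThan_atLeast0
      using sum.atLeastLessThan_concat[of 0 "N*q" "N*q+q" tm] by (simp add: add.commute)
    also have "\<dots> = (\<Sum>j=1..q. \<theta> j * complex_of_real (FF q (real j / real q) - FF q (real j / real q + real N))
        + \<theta> j * complex_of_real (FF q (real j / real q + real N) - FF q (real j / real q + real N + 1)))"
      unfolding Suc block by (simp add: sum.distrib)
    also have "\<dots> = (\<Sum>j=1..q. \<theta> j * complex_of_real (FF q (real j / real q) - FF q (real j / real q + real (Suc N))))"
      by (rule sum.cong) (auto simp: algebra_simps)
    finally show ?case .
  qed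
  have lim0: "(\<lambda>N. \<Sum>j=1..q. \<theta> j * complex_of_real (FF q (real j / real q + real N))) \<longlonglongrightarrow> 0"
  proof -
    have eq: "(\<Sum>j=1..q. \<theta> j * complex_of_real (FF q (real j / real q + real N)))
       = (\<Sum>j=1..q. \<theta> j * complex_of_real (FF q (real N + real j / real q) - FF q (real N)))" for N
    proof -
      have "(\<Sum>j=1..q. \<theta> j * complex_of_real (FF q (real N + real j / real q) - FF q (real N)))
          = (\<Sum>j=1..q. \<theta> j * complex_of_real (FF q (real N + real j / real q)))
            - (\<Sum>j=1..q. \<theta> j) * complex_of_real (FF q (real N))"
        by (simp add: sum_subtractf sum_distrib_right right_diff_distrib)
      then show ?thesis using assms(5) by (simp add: add.commute)
    qed
    have "(\<lambda>N. \<Sum>j=1..q. \<theta> j * complex_of_real (FF q (real N + real j / real q) - FF q (real N))) \<longlonglongrightarrow> 0"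
    proof (rule tendsto_null_sum)
      fix j assume j: "j \<in> {1..q}"
      show "(\<lambda>N. \<theta> j * complex_of_real (FF q (real N + real j / real q) - FF q (real N))) \<longlonglongrightarrow> 0"
      proof (rule Lim_null_comparison)
        show "\<forall>\<^sub>F N in sequentially. norm (\<theta> j * complex_of_real (FF q (real N + real j / real q) - FF q (real N)))
              \<le> norm (\<theta> j) * (ln (real N + 2) - ln (real N - 1))"
          unfolding eventually_sequentially
        proof (intro exI allI impI)
          fix N :: nat assume N: "N \<ge> 2"
          have y: "0 \<le> real j / real q" "real j / real q \<le> 1" using j q by auto
          have "\<bar>FF q (real N + real j / real q) - FF q (real N)\<bar> \<le> ln (real N + 2) - ln (real N - 1)"
            by (rule FF_shift_bound[OF q _ y]) (use N in simp)
          then show "norm (\<theta> j * complex_of_real (FF q (real N + real j / real q) - FF q (real N)))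
              \<le> norm (\<theta> j) * (ln (real N + 2) - ln (real N - 1))"
            by (simp add: norm_mult mult_left_mono del: of_real_diff)
        qed
        show "(\<lambda>N. norm (\<theta> j) * (ln (real N + 2) - ln (real N - 1))) \<longlonglongrightarrow> 0"
          by (rule tendsto_mult_right_zero[OF lnlim])
      qed
    qed
    then show ?thesis unfolding eq .
  qed
  have limNq: "(\<lambda>N. T (N*q)) \<longlonglongrightarrow> R"
  proof -
    have "T (N*q) = R - (\<Sum>j=1..q. \<theta> j * complex_of_real (FF q (real j / real q + real N)))" for N
      unfolding partial R_def by (simp add: sum_subtractf algebra_simps)
    moreover have "(\<lambda>N. R - (\<Sum>j=1..q. \<theta> j * complex_of_real (FF q (real j / real q + real N)))) \<longlonglongrightarrow> R - 0"
      by (intro tendsto_diff tendsto_const lim0)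
    ultimately show ?thesis by simp
  qed
  define B where "B = (\<Sum>j=1..q. norm (\<theta> j))"
  have thb: "norm (\<theta> (Suc m)) \<le> B" for m
  proof -
    have e: "Suc m = (m div q) * q + Suc (m mod q)" by simp
    have "\<theta> (Suc m) = \<theta> (Suc (m mod q))" by (subst e, rule per) simp
    moreover have "Suc (m mod q) \<in> {1..q}" using q by (simp add: Suc_leI)
    ultimately show ?thesis unfolding B_def
      by (metis (no_types, lifting) finite_atLeastAtMost member_le_sum norm_ge_zero)
  qed
  have tm0: "tm \<longlonglongrightarrow> 0"
  proof (rule Lim_null_comparison)
    show "\<forall>\<^sub>F m in sequentially. norm (tm m) \<le> B * \<bar>1 - real (Suc m) * ln (real (Suc m + 1) / real (Suc m))\<bar>"
    proof (intro always_eventually allI)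
      fix m
      have "norm (tm m) = norm (\<theta> (Suc m)) * \<bar>1 - real (Suc m) * ln (real (Suc m + 1) / real (Suc m))\<bar>"
        unfolding tm_def norm_mult norm_of_real ..
      also have "\<dots> \<le> B * \<bar>1 - real (Suc m) * ln (real (Suc m + 1) / real (Suc m))\<bar>"
        by (rule mult_right_mono[OF thb abs_ge_zero])
      finally show "norm (tm m) \<le> B * \<bar>1 - real (Suc m) * ln (real (Suc m + 1) / real (Suc m))\<bar>" .
    qed
    show "(\<lambda>m. B * \<bar>1 - real (Suc m) * ln (real (Suc m + 1) / real (Suc m))\<bar>) \<longlonglongrightarrow> 0"
      by (rule tendsto_mult_right_zero[OF tendsto_rabs_zero[OF alim]])
  qed
  have fdiv: "filterlim (\<lambda>M. M div q) sequentially sequentially"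
    unfolding filterlim_at_top eventually_sequentially
  proof (intro allI exI impI)
    fix Z M :: nat assume "Z * q \<le> M"
    then have "(Z * q) div q \<le> M div q" by (rule div_le_mono)
    then show "Z \<le> M div q" using q by simp
  qed
  have fi: "filterlim (\<lambda>M. i + (M div q) * q) sequentially sequentially" for i
    unfolding filterlim_at_top eventually_sequentially
  proof (intro allI exI impI)
    fix Z M :: nat assume "Z * q \<le> M"
    then have "(Z * q) div q \<le> M div q" by (rule div_le_mono)
    then have "Z \<le> M div q" using q by simp
    then have "Z * 1 \<le> (M div q) * q" using q by (intro mult_mono) auto
    then show "Z \<le> i + (M div q) * q" by simp
  qed
  have lim1: "(\<lambda>M. T ((M div q) * q)) \<longlonglongrightarrow> R"
    using filterlim_compose[OF limNq fdiv] by simp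
  have rest: "(\<lambda>M. T M - T ((M div q) * q)) \<longlonglongrightarrow> 0"
  proof (rule Lim_null_comparison)
    show "\<forall>\<^sub>F M in sequentially. norm (T M - T ((M div q) * q)) \<le> (\<Sum>i<q. norm (tm (i + (M div q) * q)))"
    proof (intro always_eventually allI)
      fix M
      define a where "a = (M div q) * q"
      have aM: "a \<le> M" "M < a + q" using q by (auto simp: a_def) (metis div_mult_mod_eq add_less_cancel_left mod_less_divisor)
      have hh: "sum tm {0..<a} + sum tm {a..<M} = sum tm {0..<M}"
        using sum.atLeastLessThan_concat[of 0 a M tm] aM by simp
      have "T M - T a = (\<Sum>m\<in>{a..<M}. tm m)"
        unfolding T_def lessThan_atLeast0 hh[symmetric] by simp
      then have "norm (T M - T a) \<le> (\<Sum>m\<in>{a..<M}. norm (tm m))"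
        by (simp add: norm_sum)
      also have "\<dots> \<le> (\<Sum>m\<in>{a..<a+q}. norm (tm m))"
        by (rule sum_mono2) (use aM in auto)
      also have "\<dots> = (\<Sum>i<q. norm (tm (i + a)))"
        using sum.shift_bounds_nat_ivl[of "\<lambda>m. norm (tm m)" 0 a q] by (simp add: add.commute lessThan_atLeast0)
      finally show "norm (T M - T ((M div q) * q)) \<le> (\<Sum>i<q. norm (tm (i + (M div q) * q)))"
        unfolding a_def .
    qed
    show "(\<lambda>M. \<Sum>i<q. norm (tm (i + (M div q) * q))) \<longlonglongrightarrow> 0"
      by (intro tendsto_null_sum tendsto_norm_zero filterlim_compose[OF tm0 fi])
  qed
  have "(\<lambda>M. T ((M div q) * q) + (T M - T ((M div q) * q))) \<longlonglongrightarrow> R + 0"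
    by (intro tendsto_add lim1 rest)
  then have "T \<longlonglongrightarrow> R" by simp
  moreover have "R = (\<Sum>j=1..q. \<theta> j * complex_of_real (ln (
              (K_hyp (real (j + 1) / real q) ^ q * exp (- real j / real q)) /
              (K_hyp (real j / real q) ^ q * Gamma (real (j + 1) / real q)))))"
    unfolding R_def by (rule sum.cong[OF refl], subst RHS_term[OF q]) (rule refl)
  ultimately show ?thesis unfolding sums_def T_def tm_def by simp
qed

end
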